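(* Let $d\geq 2$, $\varepsilon=\cos(2\pi/d)+i\sin(2\pi/d)$, and let $\mathbb{C}\langle Y_d\rangle=\mathbb{C}\langle y_0,\ldots,y_{d-1}\rangle$ be the free associative unital algebra, on which the cyclic group $C_d=\langle\rho\rangle$ acts by algebra automorphisms with $\rho(y_k)=\varepsilon^k y_k$, $k=0,\ldots,d-1$ (equivalently, $y_k=x_1+\varepsilon^{-k}x_2+\cdots+\varepsilon^{-k(d-1)}x_d$ and $\rho$ cyclically shifts $x_1\mapsto x_2\mapsto\cdots\mapsto x_d\mapsto x_1$). Let $U=\{u_0=y_0,u_1,\ldots,u_k\}$, where $u_1,\ldots,u_k$ are all commutative monomials $u=y_1^{n_1}\cdots y_{d-1}^{n_{d-1}}$ in $\mathbb{C}[y_0,\ldots,y_{d-1}]$ such that $1\leq n_1+\cdots+n_{d-1}\leq d$, $n_1+2n_2+\cdots+(d-1)n_{d-1}\equiv 0\pmod d$, and $u$ cannot be presented as a product of two or more monomials of this kind (so $U$ generates the commutative invariant algebra $\mathbb{C}[Y_d]^{C_d}$). Regard each $u_i=y_1^{n_{i,1}}\cdots y_{d-1}^{n_{i,d-1}}$ as the element of $\mathbb{C}\langle Y_d\rangle$ given by the same word. Then $U$ generates the $S$-algebra $(\mathbb{C}\langle Y_d\rangle^{C_d},\circ)$, i.e. the smallest subalgebra of $\mathbb{C}\langle Y_d\rangle$ containing $U$ and closed under the operations $\circ\sigma$ is $\mathbb{C}\langle Y_d\rangle^{C_d}$.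
   Context: The $S$-algebra structure $(\mathbb{C}\langle Y_d\rangle,\circ)$: on the homogeneous component of degree $n$ the symmetric group $\mathrm{Sym}_n$ acts on the right by permuting positions of variables, $(y_{j_1}\cdots y_{j_n})\circ\sigma=y_{j_{\sigma^{-1}(1)}}\cdots y_{j_{\sigma^{-1}(n)}}$, extended linearly. An $S$-subalgebra is a (unital) subalgebra that is a graded subspace whose homogeneous components of each degree $n$ are closed under $\circ\sigma$ for all $\sigma\in\mathrm{Sym}_n$; the $S$-subalgebra generated by a set of homogeneous elements is the smallest such subalgebra containing it. $\mathbb{C}\langle Y_d\rangle^{C_d}=\{f:\rho(f)=f\}$. *)

theory Defs
  imports Complex_Main "HOL-Combinatorics.Permutations"
begin

text \<open>Elements of the free associative unital algebra C<y_0,...,y_{d-1}> are represented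
  as finitely supported coefficient functions on words; a word is a list of letter
  indices (the letter j stands for y_j).\<close>

type_synonym ncpoly = "nat list \<Rightarrow> complex"

definition NC :: "nat \<Rightarrow> ncpoly set" where
  "NC d = {f. finite {w. f w \<noteq> 0} \<and> (\<forall>w. f w \<noteq> 0 \<longrightarrow> set w \<subseteq> {..<d})}"

definition nc_one :: ncpoly where
  "nc_one = (\<lambda>w. if w = [] then 1 else 0)"

definition nc_mono :: "nat list \<Rightarrow> ncpoly" where
  "nc_mono u = (\<lambda>w. if w = u then 1 else 0)"

definition nc_add :: "ncpoly \<Rightarrow> ncpoly \<Rightarrow> ncpoly" where
  "nc_add f g = (\<lambda>w. f w + g w)"

definition nc_smult :: "complex \<Rightarrow> ncpoly \<Rightarrow> ncpoly" where
  "nc_smult c f = (\<lambda>w. c * f w)"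

definition nc_mult :: "ncpoly \<Rightarrow> ncpoly \<Rightarrow> ncpoly" where
  "nc_mult f g = (\<lambda>w. \<Sum>i\<le>length w. f (take i w) * g (drop i w))"

definition homog :: "nat \<Rightarrow> ncpoly \<Rightarrow> ncpoly" where
  "homog n f = (\<lambda>w. if length w = n then f w else 0)"

text \<open>Positions are 0-based: (w o sigma) ! j = w ! (inv sigma j), for sigma permuting {..<n}.\<close>
definition permw :: "(nat \<Rightarrow> nat) \<Rightarrow> nat list \<Rightarrow> nat list" where
  "permw \<sigma> w = map (\<lambda>j. w ! inv \<sigma> j) [0..<length w]"

text \<open>Linear extension of the word action to a polynomial: the coefficient of v in
  f o sigma is the coefficient in f of the unique word w with w o sigma = v.\<close>
definition nc_act :: "ncpoly \<Rightarrow> (nat \<Rightarrow> nat) \<Rightarrow> ncpoly" where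
  "nc_act f \<sigma> = (\<lambda>v. f (permw (inv \<sigma>) v))"

definition S_subalgebra :: "nat \<Rightarrow> ncpoly set \<Rightarrow> bool" where
  "S_subalgebra d A \<longleftrightarrow>
     A \<subseteq> NC d \<and> nc_one \<in> A \<and>
     (\<forall>f\<in>A. \<forall>g\<in>A. nc_add f g \<in> A) \<and>
     (\<forall>c. \<forall>f\<in>A. nc_smult c f \<in> A) \<and>
     (\<forall>f\<in>A. \<forall>g\<in>A. nc_mult f g \<in> A) \<and>
     (\<forall>n. \<forall>f\<in>A. homog n f \<in> A) \<and>
     (\<forall>n \<sigma>. \<forall>f\<in>A. \<sigma> permutes {..<n} \<and> homog n f = f \<longrightarrow> nc_act f \<sigma> \<in> A)"

definition S_generated :: "nat \<Rightarrow> ncpoly set \<Rightarrow> ncpoly set" where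
  "S_generated d U = \<Inter> {A. S_subalgebra d A \<and> U \<subseteq> A}"

definition eps :: "nat \<Rightarrow> complex" where
  "eps d = Complex (cos (2 * pi / real d)) (sin (2 * pi / real d))"

text \<open>The algebra automorphism rho with rho(y_k) = eps^k y_k acts on a word w by the scalar
  eps^(sum of letter indices of w).\<close>
definition rho :: "nat \<Rightarrow> ncpoly \<Rightarrow> ncpoly" where
  "rho d f = (\<lambda>w. eps d ^ sum_list w * f w)"

definition invariants :: "nat \<Rightarrow> ncpoly set" where
  "invariants d = {f \<in> NC d. rho d f = f}"

text \<open>Exponent vectors (n_1,...,n_{d-1}) of the admissible commutative monomials.\<close>
definition admissible :: "nat \<Rightarrow> (nat \<Rightarrow> nat) \<Rightarrow> bool" where
  "admissible d ns \<longleftrightarrow>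
     (\<forall>j. (j = 0 \<or> d \<le> j) \<longrightarrow> ns j = 0) \<and>
     1 \<le> (\<Sum>j\<in>{1..<d}. ns j) \<and> (\<Sum>j\<in>{1..<d}. ns j) \<le> d \<and>
     (\<Sum>j\<in>{1..<d}. j * ns j) mod d = 0"

definition indecomposable :: "nat \<Rightarrow> (nat \<Rightarrow> nat) \<Rightarrow> bool" where
  "indecomposable d ns \<longleftrightarrow> admissible d ns \<and>
     \<not> (\<exists>a b. admissible d a \<and> admissible d b \<and> ns = (\<lambda>j. a j + b j))"

definition mono_word :: "nat \<Rightarrow> (nat \<Rightarrow> nat) \<Rightarrow> nat list" where
  "mono_word d ns = concat (map (\<lambda>j. replicate (ns j) j) [1..<d])"

definition U_gen :: "nat \<Rightarrow> ncpoly set" where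
  "U_gen d = insert (nc_mono [0]) {nc_mono (mono_word d ns) | ns. indecomposable d ns}"

end

theory Submission
  imports Defs
begin

lemma eps_cis: "eps d = cis (2 * pi / real d)"
  by (simp add: eps_def complex_eq_iff)

lemma eps_pow: "eps d ^ k = cis (2 * pi * real k / real d)"
  by (simp add: eps_cis DeMoivre mult_ac)

lemma eps_pow_d: "d > 0 \<Longrightarrow> eps d ^ d = 1"
  by (simp add: eps_pow)

lemma eps_pow_eq_1:
  assumes "d > 0" shows "eps d ^ k = 1 \<longleftrightarrow> d dvd k"
proof
  assume "d dvd k" then obtain m where "k = d * m" by blast
  then show "eps d ^ k = 1" by (simp add: power_mult eps_pow_d assms)
next
  assume h: "eps d ^ k = 1"
  have "eps d ^ k = eps d ^ (d * (k div d) + k mod d)" by (metis div_mult_mod_eq mult.commute)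
  also have "\<dots> = eps d ^ (k mod d)" by (simp only: power_add power_mult eps_pow_d[OF assms] power_one mult_1)
  finally have e: "eps d ^ (k mod d) = eps d ^ 0" using h by simp
  have inj: "inj_on (\<lambda>k. cis (2 * pi * real k / real d)) {..<d}"
    using bij_betw_imp_inj_on[OF bij_betw_roots_unity[OF assms]] .
  have "k mod d = 0"
    using inj_onD[OF inj, of "k mod d" 0] e assms by (simp add: eps_pow)
  then show "d dvd k" by auto
qed

definition inv' :: "nat \<Rightarrow> ncpoly set" where
  "inv' d = {f. finite {w. f w \<noteq> 0} \<and> (\<forall>w. f w \<noteq> 0 \<longrightarrow> set w \<subseteq> {..<d} \<and> d dvd sum_list w)}"

lemma invariants_eq: "d > 0 \<Longrightarrow> invariants d = inv' d"
  unfolding invariants_def inv'_def NC_def rho_def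
  by (auto simp: fun_eq_iff eps_pow_eq_1[symmetric])

lemma permw_eq: "permw \<sigma> w = permute_list (inv \<sigma>) w"
  by (simp add: permw_def permute_list_def)

lemma mult_supp:
  assumes "nc_mult f g w \<noteq> 0"
  shows "\<exists>i\<le>length w. f (take i w) \<noteq> 0 \<and> g (drop i w) \<noteq> 0"
proof (rule ccontr)
  assume "\<not> ?thesis"
  then have "nc_mult f g w = 0" unfolding nc_mult_def by (intro sum.neutral) auto
  with assms show False by simp
qed

lemma inv'_sub: "d > 0 \<Longrightarrow> S_subalgebra d (inv' d)"
proof -
  assume d: "d > 0"
  have NC: "inv' d \<subseteq> NC d" unfolding inv'_def NC_def by auto
  have one: "nc_one \<in> inv' d"
  proof -
    have "{w. nc_one w \<noteq> 0} = {[]}" by (auto simp: nc_one_def)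
    then show ?thesis unfolding inv'_def by (auto simp: nc_one_def)
  qed
  have add: "nc_add f g \<in> inv' d" if "f \<in> inv' d" "g \<in> inv' d" for f g
  proof -
    have "{w. nc_add f g w \<noteq> 0} \<subseteq> {w. f w \<noteq> 0} \<union> {w. g w \<noteq> 0}" by (auto simp: nc_add_def)
    with that show ?thesis unfolding inv'_def
      by (auto simp: nc_add_def intro: finite_subset)
  qed
  have smult: "nc_smult c f \<in> inv' d" if "f \<in> inv' d" for c f
  proof -
    have "{w. nc_smult c f w \<noteq> 0} \<subseteq> {w. f w \<noteq> 0}" by (auto simp: nc_smult_def)
    with that show ?thesis unfolding inv'_def
      by (auto simp: nc_smult_def intro: finite_subset)
  qed
  have homog: "homog n f \<in> inv' d" if "f \<in> inv' d" for n f
  proof -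
    have "{w. homog n f w \<noteq> 0} \<subseteq> {w. f w \<noteq> 0}" by (auto simp: homog_def)
    with that show ?thesis unfolding inv'_def
      by (auto simp: homog_def intro: finite_subset)
  qed
  have mult: "nc_mult f g \<in> inv' d" if f: "f \<in> inv' d" and g: "g \<in> inv' d" for f g
  proof -
    have sub: "{w. nc_mult f g w \<noteq> 0} \<subseteq> (\<lambda>(u,v). u @ v) ` ({w. f w \<noteq> 0} \<times> {w. g w \<noteq> 0})"
    proof
      fix w assume "w \<in> {w. nc_mult f g w \<noteq> 0}"
      then obtain i where "f (take i w) \<noteq> 0" "g (drop i w) \<noteq> 0" using mult_supp[of f g w] by auto
      then show "w \<in> (\<lambda>(u,v). u @ v) ` ({w. f w \<noteq> 0} \<times> {w. g w \<noteq> 0})"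
        by (intro image_eqI[of _ _ "(take i w, drop i w)"]) auto
    qed
    have fin: "finite {w. nc_mult f g w \<noteq> 0}"
      using f g unfolding inv'_def by (intro finite_subset[OF sub]) auto
    have "set w \<subseteq> {..<d} \<and> d dvd sum_list w" if nz: "nc_mult f g w \<noteq> 0" for w
    proof -
      obtain i where i: "f (take i w) \<noteq> 0" "g (drop i w) \<noteq> 0" using mult_supp[OF nz] by blast
      have "set (take i w) \<subseteq> {..<d} \<and> d dvd sum_list (take i w)" using f i unfolding inv'_def by auto
      moreover have "set (drop i w) \<subseteq> {..<d} \<and> d dvd sum_list (drop i w)" using g i unfolding inv'_def by auto
      moreover have "set w = set (take i w) \<union> set (drop i w)" by (metis append_take_drop_id set_append)
      moreover have "sum_list w = sum_list (take i w) + sum_list (drop i w)" by (metis append_take_drop_id sum_list_append)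
      ultimately show ?thesis by auto
    qed
    with fin show ?thesis unfolding inv'_def by auto
  qed
  have act: "nc_act f \<sigma> \<in> inv' d" if f: "f \<in> inv' d" and s: "\<sigma> permutes {..<n}" and h: "homog n f = f" for f \<sigma> n
  proof -
    have ii: "inv (inv \<sigma>) = \<sigma>" using permutes_inv_inv[OF s] .
    have key: "length v = n \<and> f (permute_list \<sigma> v) \<noteq> 0" if "nc_act f \<sigma> v \<noteq> 0" for v
    proof -
      have fz: "f (permute_list \<sigma> v) \<noteq> 0" using that by (simp add: nc_act_def permw_eq ii)
      then have "homog n f (permute_list \<sigma> v) \<noteq> 0" using h by simp
      then have "length v = n" by (simp add: homog_def split: if_splits)
      with fz show ?thesis by simp
    qed
    have sub: "{v. nc_act f \<sigma> v \<noteq> 0} \<subseteq> permute_list (inv \<sigma>) ` {w. f w \<noteq> 0}"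
    proof
      fix v assume "v \<in> {v. nc_act f \<sigma> v \<noteq> 0}"
      then have k: "length v = n" "f (permute_list \<sigma> v) \<noteq> 0" using key by auto
      have "permute_list (\<sigma> \<circ> inv \<sigma>) v = permute_list (inv \<sigma>) (permute_list \<sigma> v)"
        using permute_list_compose[of "inv \<sigma>" v \<sigma>] permutes_inv[OF s] k by simp
      moreover have "\<sigma> \<circ> inv \<sigma> = id" using permutes_inv_o(1)[OF s] .
      ultimately have "v = permute_list (inv \<sigma>) (permute_list \<sigma> v)" by simp
      with k show "v \<in> permute_list (inv \<sigma>) ` {w. f w \<noteq> 0}" by blast
    qed
    have fin: "finite {v. nc_act f \<sigma> v \<noteq> 0}"
      using f unfolding inv'_def by (intro finite_subset[OF sub]) auto
    have "set v \<subseteq> {..<d} \<and> d dvd sum_list v" if "nc_act f \<sigma> v \<noteq> 0" for v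
    proof -
      from key[OF that] have k: "length v = n" "f (permute_list \<sigma> v) \<noteq> 0" by auto
      have m: "mset (permute_list \<sigma> v) = mset v" using s k by simp
      have "set (permute_list \<sigma> v) \<subseteq> {..<d} \<and> d dvd sum_list (permute_list \<sigma> v)"
        using f k unfolding inv'_def by auto
      moreover have "set (permute_list \<sigma> v) = set v" by (metis m set_mset_mset)
      moreover have "sum_list (permute_list \<sigma> v) = sum_list v" by (metis m sum_mset_sum_list)
      ultimately show ?thesis by simp
    qed
    with fin show ?thesis unfolding inv'_def by auto
  qed
  show ?thesis unfolding S_subalgebra_def
    apply (intro conjI)
          apply (rule NC)
         apply (rule one)
        apply (blast intro: add)
       apply (blast intro: smult)
      apply (blast intro: mult)
     apply (blast intro: homog)
    apply (blast intro: act)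
    done
qed



lemma SA_one: "S_subalgebra d A \<Longrightarrow> nc_one \<in> A" by (simp add: S_subalgebra_def)
lemma SA_add: "S_subalgebra d A \<Longrightarrow> f \<in> A \<Longrightarrow> g \<in> A \<Longrightarrow> nc_add f g \<in> A" by (simp add: S_subalgebra_def)
lemma SA_smult: "S_subalgebra d A \<Longrightarrow> f \<in> A \<Longrightarrow> nc_smult c f \<in> A" by (simp add: S_subalgebra_def)
lemma SA_mult: "S_subalgebra d A \<Longrightarrow> f \<in> A \<Longrightarrow> g \<in> A \<Longrightarrow> nc_mult f g \<in> A" by (simp add: S_subalgebra_def)
lemma SA_act: "S_subalgebra d A \<Longrightarrow> f \<in> A \<Longrightarrow> \<sigma> permutes {..<n} \<Longrightarrow> homog n f = f \<Longrightarrow> nc_act f \<sigma> \<in> A"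
  by (simp add: S_subalgebra_def)

lemma mono_mult: "nc_mult (nc_mono u) (nc_mono v) = nc_mono (u @ v)"
proof
  fix w
  show "nc_mult (nc_mono u) (nc_mono v) w = nc_mono (u @ v) w"
  proof (cases "w = u @ v")
    case True
    have "nc_mult (nc_mono u) (nc_mono v) w = (\<Sum>i\<le>length w. if i = length u then 1 else 0)"
      unfolding nc_mult_def nc_mono_def
    proof (intro sum.cong refl)
      fix i assume i: "i \<in> {..length w}"
      show "(if take i w = u then 1 else 0) * (if drop i w = v then 1 else 0) = (if i = length u then 1 else (0::complex))"
      proof (cases "i = length u")
        case True2: True
        then show ?thesis using True by simp
      next
        case False2: False
        have "length (take i w) = i" using i by simp
        then have "take i w \<noteq> u" using False2 by auto
        then show ?thesis using False2 by simp
      qed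
    qed
    also have "\<dots> = 1" using True by simp
    finally show ?thesis using True by (simp add: nc_mono_def)
  next
    case False
    have "nc_mult (nc_mono u) (nc_mono v) w = (\<Sum>i\<le>length w. 0)"
      unfolding nc_mult_def nc_mono_def
      by (intro sum.cong refl) (auto, metis False append_take_drop_id)
    then show ?thesis using False by (simp add: nc_mono_def)
  qed
qed

lemma nc_mono_Nil: "nc_mono [] = nc_one"
  by (simp add: nc_mono_def nc_one_def fun_eq_iff)

lemma perm_closed:
  assumes A: "S_subalgebra d A" and w: "nc_mono w \<in> A" and m: "mset w' = mset w"
  shows "nc_mono w' \<in> A"
proof -
  obtain p where p: "p permutes {..<length w}" "permute_list p w = w'"
    using mset_eq_permutation[OF m] by blast
  have ip: "inv p permutes {..<length w}" using permutes_inv[OF p(1)] .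
  have iip: "inv (inv (inv p)) = inv p" using permutes_inv_inv[OF ip] .
  have h: "homog (length w) (nc_mono w) = nc_mono w"
    by (auto simp: homog_def nc_mono_def fun_eq_iff)
  have "nc_act (nc_mono w) (inv p) \<in> A"
    using SA_act[OF A w ip h] .
  moreover have "nc_act (nc_mono w) (inv p) = nc_mono w'"
  proof
    fix v
    have "(permute_list (inv p) v = w) \<longleftrightarrow> v = w'"
    proof
      assume e: "permute_list (inv p) v = w"
      then have l: "length v = length w" by auto
      have "permute_list (inv p \<circ> p) v = permute_list p (permute_list (inv p) v)"
        using permute_list_compose[of p v "inv p"] p(1) l by simp
      moreover have "inv p \<circ> p = id" using permutes_inv_o(2)[OF p(1)] .
      ultimately show "v = w'" using e p(2) by simp
    next
      assume e: "v = w'"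
      have "permute_list (p \<circ> inv p) w = permute_list (inv p) (permute_list p w)"
        using permute_list_compose[of "inv p" w p] ip by simp
      moreover have "p \<circ> inv p = id" using permutes_inv_o(1)[OF p(1)] .
      ultimately show "permute_list (inv p) v = w" using e p(2) by simp
    qed
    then show "nc_act (nc_mono w) (inv p) v = nc_mono w' v"
      by (simp add: nc_act_def permw_eq iip nc_mono_def)
  qed
  ultimately show ?thesis by simp
qed

lemma sum_closed:
  assumes A: "S_subalgebra d A" and fin: "finite S" and all: "\<forall>w\<in>S. nc_mono w \<in> A"
  shows "(\<lambda>v. \<Sum>w\<in>S. c w * nc_mono w v) \<in> A"
  using fin all
proof (induction S rule: finite_induct)
  case empty
  have "(\<lambda>v. 0) = nc_smult 0 nc_one" by (simp add: nc_smult_def)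
  moreover have "nc_smult 0 nc_one \<in> A" using SA_smult[OF A SA_one[OF A]] .
  ultimately show ?case by simp
next
  case (insert x F)
  have "(\<lambda>v. \<Sum>w\<in>insert x F. c w * nc_mono w v)
        = nc_add (nc_smult (c x) (nc_mono x)) (\<lambda>v. \<Sum>w\<in>F. c w * nc_mono w v)"
    using insert.hyps by (simp add: nc_add_def nc_smult_def fun_eq_iff)
  moreover have "nc_smult (c x) (nc_mono x) \<in> A" using SA_smult[OF A] insert.prems by simp
  moreover have "(\<lambda>v. \<Sum>w\<in>F. c w * nc_mono w v) \<in> A" using insert by blast
  ultimately show ?case using SA_add[OF A] by simp
qed

definition R :: "nat \<Rightarrow> (nat \<Rightarrow> nat) \<Rightarrow> nat multiset" where
  "R d ns = (\<Sum>j\<in>{1..<d}. replicate_mset (ns j) j)"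

lemma mset_concat_map: "mset (concat (map f xs)) = (\<Sum>x\<leftarrow>xs. mset (f x))"
  by (induction xs) auto

lemma mset_mono_word: "mset (mono_word d ns) = R d ns"
proof -
  have "mset (mono_word d ns) = (\<Sum>j\<leftarrow>[1..<d]. replicate_mset (ns j) j)"
    unfolding mono_word_def mset_concat_map by simp
  also have "\<dots> = R d ns" unfolding R_def
    by (subst sum_list_distinct_conv_sum_set) auto
  finally show ?thesis .
qed

lemma count_R: "count (R d ns) x = (if 1 \<le> x \<and> x < d then ns x else 0)"
  unfolding R_def count_sum by (simp add: sum.delta)

lemma size_sum_gen: "finite S \<Longrightarrow> size (\<Sum>j\<in>S. F j) = (\<Sum>j\<in>S. size (F j :: 'a multiset))"
  by (induction S rule: finite_induct) auto

lemma sum_mset_sum_gen: "finite S \<Longrightarrow> sum_mset (\<Sum>j\<in>S. F j) = (\<Sum>j\<in>S. sum_mset (F j :: nat multiset))"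
  by (induction S rule: finite_induct) auto

lemma size_R: "size (R d ns) = (\<Sum>j\<in>{1..<d}. ns j)"
  unfolding R_def by (simp add: size_sum_gen)

lemma sum_mset_R: "sum_mset (R d ns) = (\<Sum>j\<in>{1..<d}. j * ns j)"
  unfolding R_def by (simp add: sum_mset_sum_gen mult.commute)

lemma R_count:
  assumes "set_mset N \<subseteq> {1..<d}" shows "R d (count N) = N"
proof (rule multiset_eqI)
  fix x
  show "count (R d (count N)) x = count N x"
  proof (cases "1 \<le> x \<and> x < d")
    case True then show ?thesis by (simp add: count_R)
  next
    case False
    then have "x \<notin># N" using assms by auto
    then show ?thesis using False by (simp add: count_R count_eq_zero_iff)
  qed
qed

lemma R_add: "R d (\<lambda>j. a j + b j) = R d a + R d b"
  by (simp add: multiset_eq_iff count_R)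

lemma R_set: "set_mset (R d ns) \<subseteq> {1..<d}"
proof
  fix x assume "x \<in># R d ns"
  then have "count (R d ns) x \<noteq> 0" by (simp add: count_eq_zero_iff)
  then show "x \<in> {1..<d}" by (simp add: count_R split: if_splits)
qed

lemma zero_sum_sub:
  fixes M :: "nat multiset"
  assumes d: "d > 0" and ne: "M \<noteq> {#}" and dv: "d dvd sum_mset M"
  shows "\<exists>N. N \<subseteq># M \<and> N \<noteq> {#} \<and> size N \<le> d \<and> d dvd sum_mset N"
proof (cases "size M \<le> d")
  case True then show ?thesis using ne dv by blast
next
  case False
  obtain xs where xs: "mset xs = M" using ex_mset by blast
  define ys where "ys = take d xs"
  have ly: "length ys = d" using False xs unfolding ys_def by auto
  define g where "g i = sum_list (take i ys) mod d" for i
  have "\<not> inj_on g {0..d}"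
  proof
    assume inj: "inj_on g {0..d}"
    have "g ` {0..d} \<subseteq> {..<d}" using d by (auto simp: g_def)
    then have "card (g ` {0..d}) \<le> d" by (metis card_lessThan card_mono finite_lessThan)
    moreover have "card (g ` {0..d}) = d + 1" using card_image[OF inj] by simp
    ultimately show False by simp
  qed
  then obtain i j where ij: "i \<in> {0..d}" "j \<in> {0..d}" "i \<noteq> j" "g i = g j"
    unfolding inj_on_def by blast
  obtain a b where ab: "a < b" "b \<le> d" "g a = g b"
  proof (cases "i < j")
    case True then show ?thesis using that ij by auto
  next
    case False then show ?thesis using that[of j i] ij by auto
  qed
  define zs where "zs = drop a (take b ys)"
  have tb: "take b ys = take a ys @ zs"
    unfolding zs_def using ab by (metis append_take_drop_id less_imp_le_nat min.absorb1 take_take)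
  have sb: "sum_list (take b ys) = sum_list (take a ys) + sum_list zs" using tb by simp
  have "d dvd sum_list zs"
    using ab(3) unfolding g_def sb by (metis add_diff_cancel_left' le_add1 mod_eq_dvd_iff_nat)
  moreover have "length zs = b - a" using ab ly unfolding zs_def by simp
  moreover have "mset zs \<subseteq># M"
  proof -
    have "mset zs \<subseteq># mset (take b ys)" using tb by simp
    also have "mset (take b ys) \<subseteq># mset ys" by (metis append_take_drop_id mset_append mset_subset_eq_add_left)
    also have "mset ys \<subseteq># mset xs" unfolding ys_def by (metis append_take_drop_id mset_append mset_subset_eq_add_left)
    finally show ?thesis using xs by simp
  qed
  ultimately show ?thesis using ab
    by (intro exI[of _ "mset zs"]) (auto simp: sum_mset_sum_list)
qed

lemma main_mset:
  assumes A: "S_subalgebra d A" and U: "U_gen d \<subseteq> A" and d: "d \<ge> 2"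
  shows "set_mset M \<subseteq> {..<d} \<Longrightarrow> d dvd sum_mset M \<Longrightarrow> \<exists>w. mset w = M \<and> nc_mono w \<in> A"
proof (induction "size M" arbitrary: M rule: less_induct)
  case less
  show ?case
  proof (cases "M = {#}")
    case True then show ?thesis using SA_one[OF A] nc_mono_Nil by (intro exI[of _ "[]"]) auto
  next
    case ne: False
    show ?thesis
    proof (cases "0 \<in># M")
      case True
      then obtain M' where M: "M = add_mset 0 M'" using multi_member_split[OF True] by blast
      have "size M' < size M" using M by simp
      moreover have "set_mset M' \<subseteq> {..<d}" using less.prems M by auto
      moreover have "d dvd sum_mset M'" using less.prems M by simp
      ultimately have "\<exists>w. mset w = M' \<and> nc_mono w \<in> A" by (rule less.hyps)
      then obtain w' where w': "mset w' = M'" "nc_mono w' \<in> A" by blast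
      have m0: "nc_mono [0] \<in> A" using U unfolding U_gen_def by auto
      have "nc_mult (nc_mono [0]) (nc_mono w') \<in> A" using SA_mult[OF A m0 w'(2)] .
      then have "nc_mono (0 # w') \<in> A" by (simp add: mono_mult)
      then show ?thesis using w' M by (intro exI[of _ "0 # w'"]) simp
    next
      case n0: False
      have Ms: "set_mset M \<subseteq> {1..<d}"
      proof
        fix x assume x: "x \<in># M"
        then have "x < d" using less.prems(1) by auto
        moreover have "x \<noteq> 0" proof assume "x = 0" with x n0 show False by simp qed
        ultimately show "x \<in> {1..<d}" by simp
      qed
      define P where "P N \<longleftrightarrow> N \<subseteq># M \<and> N \<noteq> {#} \<and> size N \<le> d \<and> d dvd sum_mset N" for N
      obtain N0 where "P N0" using zero_sum_sub[of d M] d ne less.prems(2) unfolding P_def by auto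
      then have "\<exists>N. P N \<and> (\<forall>N'. P N' \<longrightarrow> size N \<le> size N')" by (rule ex_has_least_nat)
      then obtain N where PN: "P N" and minN: "\<forall>N'. P N' \<longrightarrow> size N \<le> size N'" by blast
      have NM: "N \<subseteq># M" and Nne: "N \<noteq> {#}" and Nd: "size N \<le> d" and Ndv: "d dvd sum_mset N"
        using PN unfolding P_def by auto
      have Ns: "set_mset N \<subseteq> {1..<d}" using set_mset_mono[OF NM] Ms by (rule order_trans)
      define ns where "ns j = (if 1 \<le> j \<and> j < d then count N j else 0)" for j
      have "R d ns = R d (count N)" unfolding R_def by (intro sum.cong refl) (auto simp: ns_def)
      then have Rns: "R d ns = N" using R_count[OF Ns] by simp
      have adm: "admissible d ns" unfolding admissible_def
      proof (intro conjI allI impI)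
        fix j assume "j = 0 \<or> d \<le> j" then show "ns j = 0" by (auto simp: ns_def)
      next
        have "(\<Sum>j\<in>{1..<d}. ns j) = size N" using size_R[of d ns] Rns by simp
        moreover have "0 < size N" using Nne by (simp add: nonempty_has_size)
        ultimately show "1 \<le> (\<Sum>j\<in>{1..<d}. ns j)" "(\<Sum>j\<in>{1..<d}. ns j) \<le> d" using Nd by linarith+
      next
        have "(\<Sum>j\<in>{1..<d}. j * ns j) = sum_mset N" using sum_mset_R[of d ns] Rns by simp
        then show "(\<Sum>j\<in>{1..<d}. j * ns j) mod d = 0" using Ndv by simp
      qed
      have adm_props: "R d a \<noteq> {#} \<and> size (R d a) \<le> d \<and> d dvd sum_mset (R d a)" if "admissible d a" for a
      proof -
        have "1 \<le> size (R d a)" "size (R d a) \<le> d" "sum_mset (R d a) mod d = 0"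
          using that unfolding admissible_def size_R sum_mset_R by auto
        then show ?thesis by auto
      qed
      have indec: "indecomposable d ns"
        unfolding indecomposable_def
      proof (intro conjI adm notI, elim exE conjE)
        fix a b assume a: "admissible d a" and b: "admissible d b" and ab: "ns = (\<lambda>j. a j + b j)"
        have sum: "R d a + R d b = N" using R_add[of d a b] ab Rns by simp
        then have Ra: "R d a \<subseteq># N" using mset_subset_eq_add_left[of "R d a" "R d b"] by simp
        have "P (R d a)" unfolding P_def using adm_props[OF a] Ra NM by (auto intro: subset_mset.order_trans)
        then have "size N \<le> size (R d a)" using minN by simp
        moreover have "size N = size (R d a) + size (R d b)" using size_union[of "R d a" "R d b"] sum by simp
        moreover have "size (R d b) \<noteq> 0" using adm_props[OF b] by simp
        ultimately show False by simp
      qed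
      have "nc_mono (mono_word d ns) \<in> U_gen d" unfolding U_gen_def
        by (rule insertI2, rule CollectI, rule exI[of _ ns], simp add: indec)
      then have mw: "nc_mono (mono_word d ns) \<in> A" using U by (rule subsetD[rotated])
      have mN: "mset (mono_word d ns) = N" using mset_mono_word Rns by simp
      have "0 < size N" using Nne by (simp add: nonempty_has_size)
      then have "size (M - N) < size M" using size_Diff_submset[OF NM] size_mset_mono[OF NM] by simp
      moreover have "set_mset (M - N) \<subseteq> {..<d}" using less.prems(1) by (meson in_diffD subset_iff)
      moreover have sumM: "sum_mset M = sum_mset N + sum_mset (M - N)"
      proof -
        have "M = N + (M - N)" using NM by (simp add: subset_mset.add_diff_inverse)
        then have "sum_mset M = sum_mset (N + (M - N))" by simp
        also have "\<dots> = sum_mset N + sum_mset (M - N)" by (rule sum_mset.union)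
        finally show ?thesis .
      qed
      moreover have "d dvd sum_mset (M - N)" using less.prems(2) Ndv sumM by (simp add: dvd_add_right_iff)
      ultimately have "\<exists>w. mset w = M - N \<and> nc_mono w \<in> A" by (intro less.hyps) auto
      then obtain w' where w': "mset w' = M - N" "nc_mono w' \<in> A" by blast
      have "nc_mono (mono_word d ns @ w') \<in> A" using SA_mult[OF A mw w'(2)] mono_mult by simp
      moreover have "mset (mono_word d ns @ w') = M" using mN w' NM by (simp add: subset_mset.add_diff_inverse)
      ultimately show ?thesis by (intro exI[of _ "mono_word d ns @ w'"]) simp
    qed
  qed
qed

lemma invariants_sub:
  assumes A: "S_subalgebra d A" and U: "U_gen d \<subseteq> A" and d: "d \<ge> 2"
  shows "invariants d \<subseteq> A"
proof
  fix f assume "f \<in> invariants d"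
  then have f: "f \<in> inv' d" using invariants_eq d by simp
  define S where "S = {w. f w \<noteq> 0}"
  have fin: "finite S" using f unfolding inv'_def S_def by simp
  have all: "\<forall>w\<in>S. nc_mono w \<in> A"
  proof
    fix w assume "w \<in> S"
    then have "set w \<subseteq> {..<d}" "d dvd sum_list w" using f unfolding inv'_def S_def by auto
    then obtain w0 where "mset w0 = mset w" "nc_mono w0 \<in> A"
      using main_mset[OF A U d, of "mset w"] by (auto simp: sum_mset_sum_list)
    then show "nc_mono w \<in> A" using perm_closed[OF A] by metis
  qed
  have "f = (\<lambda>v. \<Sum>w\<in>S. f w * nc_mono w v)"
  proof
    fix v
    have "(\<Sum>w\<in>S. f w * nc_mono w v) = (\<Sum>w\<in>S. if w = v then f w else 0)"
      by (intro sum.cong refl) (simp add: nc_mono_def)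
    also have "\<dots> = f v" using fin by (simp add: sum.delta' S_def)
    finally show "f v = (\<Sum>w\<in>S. f w * nc_mono w v)" by simp
  qed
  with sum_closed[OF A fin all, of f] show "f \<in> A" by simp
qed

lemma nc_mono_inv': "set u \<subseteq> {..<d} \<Longrightarrow> d dvd sum_list u \<Longrightarrow> nc_mono u \<in> inv' d"
proof -
  assume "set u \<subseteq> {..<d}" "d dvd sum_list u"
  moreover have "{w. nc_mono u w \<noteq> 0} = {u}" by (auto simp: nc_mono_def)
  ultimately show ?thesis unfolding inv'_def by (auto simp: nc_mono_def)
qed

lemma U_inv': assumes d: "d \<ge> 2" shows "U_gen d \<subseteq> inv' d"
proof
  fix f assume "f \<in> U_gen d"
  then consider "f = nc_mono [0]" | ns where "f = nc_mono (mono_word d ns)" "admissible d ns"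
    unfolding U_gen_def indecomposable_def by blast
  then show "f \<in> inv' d"
  proof cases
    case 1 then show ?thesis using d by (auto intro: nc_mono_inv')
  next
    case 2
    have "set (mono_word d ns) \<subseteq> {..<d}"
      using R_set[of d ns] by (metis mset_mono_word set_mset_mset atLeastLessThan_iff lessThan_iff subset_iff)
    moreover have "sum_list (mono_word d ns) = (\<Sum>j\<in>{1..<d}. j * ns j)"
      by (metis mset_mono_word sum_mset_R sum_mset_sum_list)
    moreover have "(\<Sum>j\<in>{1..<d}. j * ns j) mod d = 0" using 2 unfolding admissible_def by simp
    ultimately show ?thesis using 2 by (auto intro!: nc_mono_inv')
  qed
qed

theorem theorem4p1:
  fixes d :: nat
  assumes "d \<ge> 2"
  shows "S_generated d (U_gen d) = invariants d"
proof
  have d0: "d > 0" using assms by simp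
  have "invariants d \<in> {A. S_subalgebra d A \<and> U_gen d \<subseteq> A}"
    using inv'_sub[OF d0] U_inv'[OF assms] invariants_eq[OF d0] by simp
  then show "S_generated d (U_gen d) \<subseteq> invariants d"
    unfolding S_generated_def by (rule Inter_lower)
  show "invariants d \<subseteq> S_generated d (U_gen d)"
    unfolding S_generated_def using invariants_sub[OF _ _ assms] by (intro Inter_greatest) blast
qed

end
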